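(* Let $b_n=\max\{\alpha_1(\lambda)\colon \lambda\in P(n)\}$, where $\alpha_1(\lambda)$ is the number of distinct parts of $\lambda$. Then, as formal power series in $q$, \[ \sum_{n\geq 0} b_n q^n=\frac{1}{1-q}\left(\frac{(q^2;q^2)^2_{\infty}}{(q;q)_{\infty}}-1\right). \]
   Context: $P(n)$ is the set of partitions of $n$ (with $P(0)$ containing only the empty partition). Equivalently, $\alpha_1(\lambda)$ is the number of cells of the Young diagram of $\lambda$ with hook length $1$. The notation $(a;q)_\infty=\prod_{i\geq 0}(1-aq^i)$, so $(q;q)_\infty=(1-q)(1-q^2)(1-q^3)\cdots$ and $(q^2;q^2)_\infty=(1-q^2)(1-q^4)(1-q^6)\cdots$. *)

theory Defs
  imports "HOL-Library.Multiset" "HOL-Computational_Algebra.Formal_Power_Series"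
begin

definition partitions :: "nat \<Rightarrow> nat multiset set" where
  "partitions n = {M. (\<forall>x\<in>#M. 0 < x) \<and> sum_mset M = n}"

definition alpha1 :: "nat multiset \<Rightarrow> nat" where
  "alpha1 M = card (set_mset M)"

definition b_seq :: "nat \<Rightarrow> nat" where
  "b_seq n = Max (alpha1 ` partitions n)"

text \<open>The infinite q-Pochhammer symbol (q^m;q^m)_infinity = prod_{i>=1} (1 - q^(m i)), m >= 1,
  as a formal power series: its n-th coefficient is that of the finite product over
  i = 1..n (the remaining factors are congruent to 1 modulo q^(n+1)).\<close>
definition qpoch_inf :: "nat \<Rightarrow> 'a::comm_ring_1 fps" where
  "qpoch_inf m = Abs_fps (\<lambda>n. fps_nth (\<Prod>i\<in>{1..n}. (1 - fps_X ^ (m * i))) n)"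

end

theory Submission
  imports Defs
begin

unbundle fps_syntax


definition cg :: "nat \<Rightarrow> rat fps \<Rightarrow> rat fps \<Rightarrow> bool" where
  "cg n f g \<longleftrightarrow> (\<forall>i<n. f $ i = g $ i)"

lemma cg_refl[simp]: "cg n f f" by (simp add: cg_def)
lemma cg_sym: "cg n f g \<Longrightarrow> cg n g f" by (simp add: cg_def)
lemma cg_trans: "cg n f g \<Longrightarrow> cg n g h \<Longrightarrow> cg n f h" by (simp add: cg_def)
lemma cg_mono: "cg n f g \<Longrightarrow> m \<le> n \<Longrightarrow> cg m f g" by (simp add: cg_def)
lemma cg_add: "cg n f g \<Longrightarrow> cg n f' g' \<Longrightarrow> cg n (f + f') (g + g')" by (simp add: cg_def)
lemma cg_mult: "cg n f g \<Longrightarrow> cg n f' g' \<Longrightarrow> cg n (f * f') (g * g')"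
  unfolding cg_def fps_mult_nth by (auto intro!: sum.cong)
lemma cg_sum: "(\<And>x. x \<in> A \<Longrightarrow> cg n (f x) (g x)) \<Longrightarrow> cg n (sum f A) (sum g A)"
  by (simp add: cg_def fps_sum_nth)
lemma cg_shift: "cg n f g \<Longrightarrow> cg (n + e) (f * fps_X ^ e) (g * fps_X ^ e)"
  by (simp add: cg_def fps_X_power_mult_right_nth)
lemma cg_eq: "(\<And>n. cg n f g) \<Longrightarrow> f = g"
  by (rule fps_ext) (auto simp: cg_def)
lemma cg_cancel:
  assumes "cg n (f * P) (g * P)" "P $ 0 \<noteq> 0"
  shows "cg n f g"
proof -
  have "cg n (f * P * inverse P) (g * P * inverse P)" by (rule cg_mult[OF assms(1) cg_refl])
  thus ?thesis using assms(2) by (simp add: mult.assoc inverse_mult_eq_1')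
qed
lemma cg_1_X: "n \<le> k \<Longrightarrow> cg n (1 - fps_X ^ k) 1"
  by (simp add: cg_def)

definition pr :: "nat \<Rightarrow> nat \<Rightarrow> rat fps" where
  "pr m M = (\<Prod>i\<in>{1..M}. (1 - fps_X ^ (m * i)))"

lemma pr_0[simp]: "pr m 0 = 1" by (simp add: pr_def)
lemma pr_Suc: "pr m (Suc M) = pr m M * (1 - fps_X ^ (m * Suc M))"
  by (simp add: pr_def prod.nat_ivl_Suc' mult.commute)

lemma pr_nth0: "m \<ge> 1 \<Longrightarrow> pr m M $ 0 = 1"
  by (induction M) (simp_all add: pr_Suc)

lemma pr_stable:
  assumes "m \<ge> 1" "M \<le> M'"
  shows "cg (M+1) (pr m M') (pr m M)"
  using assms(2)
proof (induction M' rule: dec_induct)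
  case base then show ?case by simp
next
  case (step k)
  have "cg (M+1) (1 - fps_X ^ (m * Suc k)) 1"
  proof (rule cg_1_X)
    have "Suc k \<le> m * Suc k" using assms(1) mult_le_mono1[of 1 m "Suc k"] by simp
    thus "M + 1 \<le> m * Suc k" using step(1) by linarith
  qed
  hence "cg (M+1) (pr m k * (1 - fps_X ^ (m * Suc k))) (pr m M * 1)"
    by (rule cg_mult[OF step(3)])
  thus ?case by (simp add: pr_Suc)
qed

lemma qpoch_cg:
  assumes "m \<ge> 1"
  shows "cg (M+1) (qpoch_inf m) (pr m M)"
  unfolding cg_def
proof (intro allI impI)
  fix i assume "i < M + 1"
  hence "cg (i+1) (pr m M) (pr m i)" using pr_stable assms by simp
  hence "pr m M $ i = pr m i $ i" by (simp add: cg_def)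
  thus "qpoch_inf m $ i = pr m M $ i" by (simp add: qpoch_inf_def pr_def)
qed

definition poch :: "nat \<Rightarrow> rat fps" where "poch k = pr 1 k"

lemma poch_0[simp]: "poch 0 = 1" by (simp add: poch_def)
lemma poch_Suc: "poch (Suc k) = poch k * (1 - fps_X ^ Suc k)"
  by (simp add: poch_def pr_Suc)
lemma poch_nth0: "poch k $ 0 = 1" by (simp add: poch_def pr_nth0)
lemma poch_nz: "poch k \<noteq> 0" using poch_nth0[of k] by auto

fun qb :: "nat \<Rightarrow> nat \<Rightarrow> rat fps" where
  "qb 0 j = (if j = 0 then 1 else 0)"
| "qb (Suc N) j = (if j = 0 then 1 else qb N (j - 1) + fps_X ^ j * qb N j)"

lemma qb_0[simp]: "qb N 0 = 1" by (cases N) auto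

lemma qb_big: "N < j \<Longrightarrow> qb N j = 0"
  by (induction N arbitrary: j) auto



lemma qb_closed: "j \<le> N \<Longrightarrow> qb N j * poch j * poch (N - j) = poch N"
proof (induction N arbitrary: j)
  case 0 then show ?case by simp
next
  case (Suc N j)
  show ?case
  proof (cases "j = 0")
    case True then show ?thesis by simp
  next
    case False
    then obtain j' where j': "j = Suc j'" by (cases j) auto
    show ?thesis
    proof (cases "j = Suc N")
      case True
      have "qb N N * poch N = poch N" using Suc.IH[of N] by simp
      moreover have "qb (Suc N) (Suc N) = qb N N" using qb_big[of N "Suc N"] by simp
      ultimately show ?thesis using True by (simp add: poch_Suc mult.assoc[symmetric])
    next
      case False
      hence jN: "j \<le> N" using Suc.prems by simp
      define a where "a = N - j"
      have ea: "N - j' = Suc a" using jN j' a_def by simp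
      have eb: "Suc N - j = Suc a" using jN a_def by simp
      have ec: "j + Suc a = Suc N" using jN a_def by simp
      have IH1: "qb N j' * poch j' * poch (Suc a) = poch N" using Suc.IH[of j'] jN j' ea by simp
      have IH2: "qb N j * poch j * poch a = poch N" using Suc.IH[of j] jN a_def by simp
      have rec: "qb (Suc N) j = qb N j' + fps_X ^ j * qb N j" using j' by simp
      have pj: "poch j = poch j' * (1 - fps_X ^ j)" using j' by (simp add: poch_Suc)
      have pa: "poch (Suc a) = poch a * (1 - fps_X ^ Suc a)" by (simp add: poch_Suc)
      have "qb (Suc N) j * poch j * poch (Suc N - j)
          = (qb N j' * poch j' * poch (Suc a)) * (1 - fps_X ^ j)
            + fps_X ^ j * (qb N j * poch j * poch a) * (1 - fps_X ^ Suc a)"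
        unfolding rec eb pj pa by (simp add: algebra_simps)
      also have "\<dots> = poch N * (1 - fps_X ^ j * fps_X ^ Suc a)"
        unfolding IH1 IH2 by (simp add: algebra_simps)
      also have "fps_X ^ j * fps_X ^ Suc a = (fps_X ^ Suc N :: rat fps)"
        using ec by (simp add: power_add[symmetric])
      finally show ?thesis by (simp add: poch_Suc)
    qed
  qed
qed

lemma qb_pascalB:
  assumes "1 \<le> j" "j \<le> Suc N"
  shows "qb (Suc N) j = qb N j + fps_X ^ (Suc N - j) * qb N (j - 1)"
proof (cases "j = Suc N")
  case True then show ?thesis using qb_big[of N "Suc N"] by simp
next
  case False
  hence jN: "j \<le> N" using assms by simp
  obtain j' where j': "j = Suc j'" using assms(1) by (cases j) auto
  define a where "a = N - j"
  have ea: "N - j' = Suc a" using jN j' a_def by simp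
  have eb: "Suc N - j = Suc a" using jN a_def by simp
  have ec: "Suc a + j = Suc N" using jN a_def by simp
  have IH1: "qb N j' * poch j' * poch (Suc a) = poch N" using qb_closed[of j' N] jN j' ea by simp
  have IH2: "qb N j * poch j * poch a = poch N" using qb_closed[of j N] jN a_def by simp
  have pj: "poch j = poch j' * (1 - fps_X ^ j)" using j' by (simp add: poch_Suc)
  have pa: "poch (Suc a) = poch a * (1 - fps_X ^ Suc a)" by (simp add: poch_Suc)
  have jj: "j - 1 = j'" using j' by simp
  have "(qb N j + fps_X ^ (Suc N - j) * qb N (j - 1)) * (poch j * poch (Suc N - j))
      = (qb N j * poch j * poch a) * (1 - fps_X ^ Suc a)
        + fps_X ^ Suc a * ((qb N j' * poch j' * poch (Suc a)) * (1 - fps_X ^ j))"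
    unfolding eb jj pj pa by (simp add: algebra_simps)
  also have "\<dots> = poch N * (1 - fps_X ^ Suc a * fps_X ^ j)"
    unfolding IH1 IH2 by (simp add: algebra_simps)
  also have "fps_X ^ Suc a * fps_X ^ j = (fps_X ^ Suc N :: rat fps)"
    using ec by (simp add: power_add[symmetric])
  also have "poch N * (1 - fps_X ^ Suc N) = qb (Suc N) j * (poch j * poch (Suc N - j))"
    using qb_closed[of j "Suc N"] assms by (simp add: poch_Suc mult.assoc)
  finally have "(qb N j + fps_X ^ (Suc N - j) * qb N (j - 1)) * (poch j * poch (Suc N - j))
     = qb (Suc N) j * (poch j * poch (Suc N - j))" .
  moreover have "poch j * poch (Suc N - j) \<noteq> 0" using poch_nz by simp
  ultimately show ?thesis by simp
qed



fun tri :: "nat \<Rightarrow> nat" where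
  "tri 0 = 0"
| "tri (Suc k) = tri k + Suc k"

definition e :: "nat \<Rightarrow> nat \<Rightarrow> nat" where
  "e m j = (if m \<le> j then tri (j - m) else tri (m - j - 1))"

lemma e_step: "1 \<le> j \<Longrightarrow> e m j + m = e m (j - 1) + j"
proof (cases "m < j")
  case True
  then obtain d where d: "j - m = Suc d" by (cases "j - m") auto
  hence dd: "j - 1 - m = d" by simp
  have a: "e m j = tri (Suc d)" using True d by (simp add: e_def)
  have b: "e m (j - 1) = tri d" using True dd by (simp add: e_def)
  show ?thesis unfolding a b using True d by simp
next
  case False
  assume j1: "1 \<le> j"
  show ?thesis
  proof (cases "j = m")
    case True then show ?thesis using j1 by (simp add: e_def)
  next
    case False
    hence jm: "j < m" using \<open>\<not> m < j\<close> by simp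
    then obtain d where d: "m - j = Suc d" by (cases "m - j") auto
    have dd: "m - (j - 1) - 1 = Suc d" using d j1 jm by simp
    have dd2: "m - j - 1 = d" using d by simp
    have a: "e m j = tri d" using jm dd2 by (simp add: e_def)
    have b: "e m (j - 1) = tri (Suc d)" using jm dd by (simp add: e_def)
    show ?thesis unfolding a b using jm d j1 by simp
  qed
qed

lemma e_Suc: "1 \<le> j \<Longrightarrow> e (Suc m) j = e m (j - 1)"
  by (auto simp: e_def)

lemma e_0: "e (Suc m) 0 = m + e m 0"
  by (cases m) (auto simp: e_def)

definition fam :: "nat \<Rightarrow> nat \<Rightarrow> nat \<Rightarrow> rat fps" where
  "fam n m j = qb (n + m) j * fps_X ^ (e m j)"

definition S :: "nat \<Rightarrow> nat \<Rightarrow> rat fps" where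
  "S n m = (\<Sum>j\<le>n+m. fam n m j)"

lemma claim1: "fam (Suc n) m j = fam n m j + (if j = 0 then 0 else fps_X ^ (Suc n) * fam n m (j - 1))"
proof (cases "j = 0")
  case True then show ?thesis by (simp add: fam_def)
next
  case False
  hence j1: "1 \<le> j" by simp
  show ?thesis
  proof (cases "j \<le> Suc (n + m)")
    case True
    have ex: "Suc (n + m) - j + e m j = Suc n + e m (j - 1)"
      using e_step[OF j1, of m] True by linarith
    have "fam (Suc n) m j = qb (Suc (n + m)) j * fps_X ^ (e m j)" by (simp add: fam_def)
    also have "\<dots> = qb (n+m) j * fps_X ^ (e m j) + qb (n + m) (j - 1) * (fps_X ^ (Suc (n + m) - j) * fps_X ^ (e m j))"
      using qb_pascalB[OF j1 True] by (simp add: algebra_simps)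
    also have "fps_X ^ (Suc (n + m) - j) * fps_X ^ (e m j) = (fps_X ^ (Suc n) * fps_X ^ (e m (j - 1)) :: rat fps)"
      unfolding power_add[symmetric] ex ..
    finally show ?thesis using False by (simp add: fam_def algebra_simps)
  next
    case False
    then show ?thesis using qb_big[of "Suc (n+m)" j] qb_big[of "n+m" j] qb_big[of "n+m" "j - 1"]
      by (simp add: fam_def)
  qed
qed

lemma claim2: "fam n (Suc m) j = (if j = 0 then 0 else fam n m (j - 1)) + fps_X ^ m * fam n m j"
proof (cases "j = 0")
  case True then show ?thesis by (simp add: fam_def e_0 power_add)
next
  case False
  hence j1: "1 \<le> j" by simp
  have ex: "j + e m (j - 1) = m + e m j" using e_step[OF j1, of m] by linarith
  have "fam n (Suc m) j = qb (Suc (n + m)) j * fps_X ^ (e m (j - 1))"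
    by (simp add: fam_def e_Suc[OF j1])
  also have "\<dots> = qb (n + m) (j - 1) * fps_X ^ (e m (j - 1)) + qb (n + m) j * (fps_X ^ j * fps_X ^ (e m (j - 1)))"
    using False by (simp add: algebra_simps)
  also have "fps_X ^ j * fps_X ^ (e m (j - 1)) = (fps_X ^ m * fps_X ^ (e m j) :: rat fps)"
    unfolding power_add[symmetric] ex ..
  finally show ?thesis using False by (simp add: fam_def algebra_simps)
qed

lemma fam_top: "fam n m (Suc (n + m)) = 0"
  by (simp add: fam_def qb_big)

lemma S_Suc1: "S (Suc n) m = (1 + fps_X ^ Suc n) * S n m"
proof -
  have "S (Suc n) m = (\<Sum>j\<le>Suc (n+m). fam n m j) + (\<Sum>j\<le>Suc (n+m). (if j = 0 then 0 else fps_X ^ (Suc n) * fam n m (j - 1)))"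
    unfolding S_def by (simp add: claim1 sum.distrib)
  also have "(\<Sum>j\<le>Suc (n+m). fam n m j) = S n m"
    by (simp add: S_def fam_top)
  also have "(\<Sum>j\<le>Suc (n+m). (if j = 0 then 0 else fps_X ^ (Suc n) * fam n m (j - 1))) = fps_X ^ Suc n * S n m"
    by (subst sum.atMost_Suc_shift) (simp add: S_def sum_distrib_left)
  finally show ?thesis by (simp add: algebra_simps)
qed

lemma S_Suc2: "S n (Suc m) = (1 + fps_X ^ m) * S n m"
proof -
  have "S n (Suc m) = (\<Sum>j\<le>Suc (n+m). (if j = 0 then 0 else fam n m (j - 1))) + (\<Sum>j\<le>Suc (n+m). fps_X ^ m * fam n m j)"
    unfolding S_def by (simp add: claim2 sum.distrib)
  also have "(\<Sum>j\<le>Suc (n+m). fps_X ^ m * fam n m j) = fps_X ^ m * S n m"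
    by (simp add: S_def fam_top sum_distrib_left)
  also have "(\<Sum>j\<le>Suc (n+m). (if j = 0 then 0 else fam n m (j - 1))) = S n m"
    by (subst sum.atMost_Suc_shift) (simp add: S_def)
  finally show ?thesis by (simp add: algebra_simps)
qed

definition Dn :: "nat \<Rightarrow> rat fps" where "Dn n = (\<Prod>i<n. (1 + fps_X ^ Suc i))"
definition En :: "nat \<Rightarrow> rat fps" where "En m = (\<Prod>i<m. (1 + fps_X ^ i))"

lemma S_prod: "S n m = Dn n * En m"
proof (induction n)
  case 0
  show ?case
  proof (induction m)
    case 0 then show ?case by (simp add: S_def fam_def e_def Dn_def En_def)
  next
    case (Suc m) then show ?case by (simp add: S_Suc2 Dn_def En_def algebra_simps)
  qed
next
  case (Suc n) then show ?case by (simp add: S_Suc1 Dn_def En_def algebra_simps)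
qed

lemma En_Suc_Dn: "En (Suc n) = 2 * Dn n"
  unfolding En_def Dn_def prod.lessThan_Suc_shift by simp

lemma poch_Dn: "poch n * Dn n = pr 2 n"
proof (induction n)
  case 0 then show ?case by (simp add: Dn_def poch_def)
next
  case (Suc n)
  have "(1 - fps_X ^ Suc n) * (1 + fps_X ^ Suc n) = (1 - fps_X ^ (2 * Suc n) :: rat fps)"
    by (simp add: algebra_simps power_mult[symmetric] power2_eq_square[symmetric] mult.commute[of 2])
  have "Dn (Suc n) = Dn n * (1 + fps_X ^ Suc n)" by (simp add: Dn_def)
  hence "poch (Suc n) * Dn (Suc n) = (poch n * Dn n) * ((1 - fps_X ^ Suc n) * (1 + fps_X ^ Suc n))"
    by (simp add: poch_Suc algebra_simps)
  also have "\<dots> = pr 2 (Suc n)" unfolding Suc \<open>(1 - fps_X ^ Suc n) * (1 + fps_X ^ Suc n) = _\<close> pr_Suc ..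
  finally show ?case .
qed



abbreviation PP :: "rat fps" where "PP \<equiv> qpoch_inf 1"
abbreviation GG :: "rat fps" where "GG \<equiv> qpoch_inf 2"

lemma P_cg: "cg (M+1) PP (poch M)"
  using qpoch_cg[of 1 M] by (simp add: poch_def)

lemma P_nth0: "PP $ 0 = 1"
  by (simp add: qpoch_inf_def)

lemma P_nz: "PP $ 0 \<noteq> 0" unfolding P_nth0 by simp

lemma qb_P:
  assumes "j \<le> N"
  shows "cg (min j (N - j) + 1) (PP * qb N j) 1"
proof -
  let ?r = "min j (N - j) + 1"
  have c1: "cg ?r PP (poch j)" using cg_mono[OF P_cg[of j]] by simp
  have c2: "cg ?r PP (poch (N - j))" using cg_mono[OF P_cg[of "N - j"]] by simp
  have c3: "cg ?r PP (poch N)" using cg_mono[OF P_cg[of N]] assms by simp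
  have "cg ?r (qb N j * PP * PP) (qb N j * poch j * poch (N - j))"
    by (rule cg_mult[OF cg_mult[OF cg_refl c1] c2])
  hence "cg ?r (qb N j * PP * PP) (poch N)" using qb_closed[OF assms] by simp
  hence "cg ?r (qb N j * PP * PP) PP" by (rule cg_trans[OF _ cg_sym[OF c3]])
  hence "cg ?r ((PP * qb N j) * PP) (1 * PP)" by (simp add: mult.commute)
  thus ?thesis by (rule cg_cancel[OF _ P_nz])
qed

lemma tri_ge: "k \<le> tri k" by (induction k) auto

lemma tri_smono: "strict_mono tri"
  by (rule strict_mono_Suc_iff[THEN iffD2]) simp

lemma bound: "j \<le> n + Suc n \<Longrightarrow> n \<le> min j (n + Suc n - j) + e (Suc n) j"
proof (cases "Suc n \<le> j")
  case True
  assume "j \<le> n + Suc n"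
  have "e (Suc n) j = tri (j - Suc n)" using True by (simp add: e_def)
  moreover have "j - Suc n \<le> tri (j - Suc n)" by (rule tri_ge)
  ultimately show ?thesis using True \<open>j \<le> n + Suc n\<close> by linarith
next
  case False
  have "e (Suc n) j = tri (n - j)" using False by (simp add: e_def)
  moreover have "n - j \<le> tri (n - j)" by (rule tri_ge)
  ultimately show ?thesis using False by linarith
qed

lemma main_cg: "cg (n+1) (PP * S n (Suc n)) (\<Sum>j\<le>n + Suc n. fps_X ^ (e (Suc n) j))"
proof -
  have "PP * S n (Suc n) = (\<Sum>j\<le>n + Suc n. (PP * qb (n + Suc n) j) * fps_X ^ (e (Suc n) j))"
    unfolding S_def fam_def sum_distrib_left by (intro sum.cong refl) (simp only: mult.assoc)
  moreover have "cg (n+1) (\<Sum>j\<le>n + Suc n. (PP * qb (n + Suc n) j) * fps_X ^ (e (Suc n) j))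
      (\<Sum>j\<le>n + Suc n. 1 * fps_X ^ (e (Suc n) j))"
  proof (rule cg_sum)
    fix j assume "j \<in> {..n + Suc n}"
    hence jN: "j \<le> n + Suc n" by simp
    have "cg (min j (n + Suc n - j) + 1 + e (Suc n) j) ((PP * qb (n + Suc n) j) * fps_X ^ (e (Suc n) j)) (1 * fps_X ^ (e (Suc n) j))"
      by (rule cg_shift[OF qb_P[OF jN]])
    moreover have "n + 1 \<le> min j (n + Suc n - j) + 1 + e (Suc n) j" using bound[OF jN] by linarith
    ultimately show "cg (n+1) ((PP * qb (n + Suc n) j) * fps_X ^ (e (Suc n) j)) (1 * fps_X ^ (e (Suc n) j))"
      by (rule cg_mono)
  qed
  ultimately show ?thesis by simp
qed


lemma sum_e: "(\<Sum>j\<le>n + Suc n. fps_X ^ (e (Suc n) j) :: rat fps) = 2 * (\<Sum>k\<le>n. fps_X ^ (tri k))"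
proof -
  let ?g = "\<lambda>j. fps_X ^ (e (Suc n) j) :: rat fps"
  have "(\<Sum>j\<le>n + Suc n. ?g j) = sum ?g {0..n + Suc n}" by (simp add: atMost_atLeast0)
  also have "\<dots> = sum ?g {0..n} + sum ?g {n + 1..n + Suc n}" by (rule sum.ub_add_nat) simp
  also have "sum ?g {0..n} = sum (\<lambda>i. ?g (n + 0 - i)) {0..n}" by (rule sum.atLeastAtMost_rev)
  also have "\<dots> = sum (\<lambda>k. fps_X ^ (tri k)) {0..n}"
  proof (rule sum.cong[OF refl])
    fix i assume "i \<in> {0..n}"
    hence "e (Suc n) (n + 0 - i) = tri i" by (auto simp: e_def)
    thus "?g (n + 0 - i) = fps_X ^ (tri i)" by simp
  qed
  also have "\<dots> = (\<Sum>k\<le>n. fps_X ^ (tri k))" by (simp only: atMost_atLeast0)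
  also have "sum ?g {n + 1..n + Suc n} = sum ?g {0 + Suc n..n + Suc n}" by simp
  also have "\<dots> = sum (\<lambda>i. ?g (i + Suc n)) {0..n}" by (rule sum.shift_bounds_cl_nat_ivl)
  also have "\<dots> = (\<Sum>k\<le>n. fps_X ^ (tri k))"
    unfolding atMost_atLeast0 by (rule sum.cong[OF refl]) (simp add: e_def)
  finally show ?thesis by simp
qed

definition psi :: "rat fps" where
  "psi = Abs_fps (\<lambda>i. if \<exists>k. tri k = i then 1 else 0)"

lemma psi_cg: "cg (n+1) (\<Sum>k\<le>n. fps_X ^ (tri k)) psi"
  unfolding cg_def
proof (intro allI impI)
  fix i assume i: "i < n + 1"
  have "(\<Sum>k\<le>n. fps_X ^ (tri k) :: rat fps) $ i = (\<Sum>k\<le>n. if i = tri k then 1 else 0)"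
    by (simp add: fps_sum_nth)
  also have "\<dots> = (if \<exists>k. tri k = i then 1 else 0)"
  proof (cases "\<exists>k. tri k = i")
    case True
    then obtain k0 where k0: "tri k0 = i" by blast
    have "k0 \<le> n" using tri_ge[of k0] k0 i by simp
    have "(\<Sum>k\<le>n. if i = tri k then 1 else 0 :: rat) = (\<Sum>k\<le>n. if k = k0 then 1 else 0)"
      using strict_mono_eq[OF tri_smono] k0 by (intro sum.cong) auto
    also have "\<dots> = 1" using \<open>k0 \<le> n\<close> by simp
    finally show ?thesis using True by simp
  next
    case False then show ?thesis by (auto intro!: sum.neutral)
  qed
  finally show "(\<Sum>k\<le>n. fps_X ^ (tri k)) $ i = psi $ i" by (simp add: psi_def)
qed


lemma gauss: "GG ^ 2 = PP * psi"
proof (rule cg_eq)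
  fix n
  have cG: "cg (n+1) GG (pr 2 n)" by (rule qpoch_cg) simp
  have cP: "cg (n+1) PP (poch n)" by (rule P_cg)
  have "S n (Suc n) = 2 * (Dn n * Dn n)" by (simp add: S_prod En_Suc_Dn algebra_simps)
  hence "cg (n+1) (PP * (2 * (Dn n * Dn n))) (2 * (\<Sum>k\<le>n. fps_X ^ (tri k)))"
    using main_cg[of n] sum_e[of n] by simp
  moreover have "cg (n+1) (2 * (\<Sum>k\<le>n. fps_X ^ (tri k))) (2 * psi)"
    by (rule cg_mult[OF cg_refl psi_cg])
  ultimately have "cg (n+1) (PP * (2 * (Dn n * Dn n))) (2 * psi)"
    by (rule cg_trans)
  hence "cg (n+1) ((PP * Dn n * Dn n) * 2) (psi * 2)"
    by (simp add: algebra_simps)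
  hence c1: "cg (n+1) (PP * Dn n * Dn n) psi" by (rule cg_cancel) simp
  have "cg (n+1) (GG * GG) (pr 2 n * pr 2 n)" by (rule cg_mult[OF cG cG])
  also have "pr 2 n * pr 2 n = poch n * poch n * (Dn n * Dn n)"
    by (simp add: poch_Dn[symmetric] algebra_simps)
  finally have c2: "cg (n+1) (GG * GG) (poch n * poch n * (Dn n * Dn n))" .
  have c3: "cg (n+1) (poch n * (PP * Dn n * Dn n)) (PP * psi)"
    using cg_mult[OF cg_sym[OF cP] c1] by simp
  have eq: "poch n * poch n * (Dn n * Dn n) = poch n * (poch n * Dn n * Dn n)" by (simp add: algebra_simps)
  have c4: "cg (n+1) (poch n * (poch n * Dn n * Dn n)) (poch n * (PP * Dn n * Dn n))"
    by (rule cg_mult[OF cg_refl cg_mult[OF cg_mult[OF cg_sym[OF cP] cg_refl] cg_refl]])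
  have "cg (n+1) (GG * GG) (poch n * (PP * Dn n * Dn n))"
    by (rule cg_trans[OF c2[unfolded eq] c4])
  hence "cg (n+1) (GG * GG) (PP * psi)" by (rule cg_trans[OF _ c3])
  hence "cg n (GG * GG) (PP * psi)" by (rule cg_mono) simp
  thus "cg n (GG ^ 2) (PP * psi)" by (simp add: power2_eq_square)
qed



lemma tri_card: "finite A \<Longrightarrow> \<forall>x\<in>A. 0 < x \<Longrightarrow> tri (card A) \<le> \<Sum>A"
proof (induction "card A" arbitrary: A)
  case 0 then show ?case by simp
next
  case (Suc c A)
  have ne: "A \<noteq> {}" using Suc.hyps(2) by auto
  define m where "m = Max A"
  have mS: "m \<in> A" using Max_in[OF Suc.prems(1) ne] m_def by simp
  have "A \<subseteq> {1..m}"
  proof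
    fix x assume "x \<in> A"
    thus "x \<in> {1..m}" using Suc.prems Max_ge[OF Suc.prems(1)] m_def by (auto simp: Suc_le_eq)
  qed
  hence cm: "card A \<le> m" using card_mono[of "{1..m}" A] by simp
  have c: "c = card (A - {m})" using Suc.hyps(2) mS Suc.prems(1) by simp
  have IH: "tri c \<le> \<Sum>(A - {m})" using Suc.hyps(1)[OF c] Suc.prems c by auto
  have "\<Sum>A = m + \<Sum>(A - {m})" using sum.remove[OF Suc.prems(1) mS] by simp
  then show ?case using IH cm Suc.hyps(2)[symmetric] by simp
qed

lemma sum_set_le: "\<Sum>(set_mset M) \<le> sum_mset (M :: nat multiset)"
proof -
  have "mset_set (set_mset M) \<subseteq># M" by (rule mset_set_set_mset_msubset)
  then obtain B where B: "M = mset_set (set_mset M) + B" by (metis subset_mset.le_iff_add)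
  have "\<Sum>(set_mset M) = sum_mset (mset_set (set_mset M))"
    using sum_unfold_sum_mset[of "\<lambda>x. x" "set_mset M"] by simp
  also have "\<dots> \<le> sum_mset (mset_set (set_mset M) + B)" by simp
  finally show ?thesis using B by simp
qed

lemma sum_1_tri: "\<Sum>{1..k} = tri k"
  by (induction k) (simp_all add: sum.nat_ivl_Suc')

lemma b_char:
  assumes "tri k \<le> n" "n < tri (Suc k)"
  shows "b_seq n = k"
proof -
  have up: "y \<le> k" if yy: "y \<in> alpha1 ` partitions n" for y
  proof -
    obtain M where M: "M \<in> partitions n" "y = alpha1 M" using yy by blast
    have "tri (card (set_mset M)) \<le> \<Sum>(set_mset M)"
      using M(1) by (intro tri_card) (auto simp: partitions_def)
    also have "\<dots> \<le> sum_mset M" by (rule sum_set_le)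
    also have "\<dots> = n" using M(1) by (simp add: partitions_def)
    finally have "tri (card (set_mset M)) < tri (Suc k)" using assms(2) by linarith
    hence "card (set_mset M) < Suc k" using strict_mono_less[OF tri_smono] by blast
    thus ?thesis using M(2) by (simp add: alpha1_def)
  qed
  have wit: "k \<in> alpha1 ` partitions n"
  proof (cases k)
    case 0
    hence "n = 0" using assms by simp
    hence "{#} \<in> partitions n" by (simp add: partitions_def)
    moreover have "alpha1 {#} = 0" by (simp add: alpha1_def)
    ultimately show ?thesis using 0 by (metis image_eqI)
  next
    case (Suc k')
    define W where "W = mset_set {1..k'} + {# n - tri k' #}"
    have big: "Suc k' \<le> n - tri k'" using assms(1) Suc by simp
    have sW: "set_mset W = insert (n - tri k') {1..k'}" by (simp add: W_def)
    have notin: "n - tri k' \<notin> {1..k'}" using big by simp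
    have "sum_mset W = \<Sum>{1..k'} + (n - tri k')"
      using sum_unfold_sum_mset[of "\<lambda>x. x" "{1..k'}"] by (simp add: W_def)
    also have "\<dots> = n" using sum_1_tri[of k'] assms(1) Suc by simp
    finally have "W \<in> partitions n" using sW big by (auto simp: partitions_def)
    moreover have "alpha1 W = k" using sW notin Suc by (simp add: alpha1_def)
    ultimately show ?thesis by (metis image_eqI)
  qed
  have fin: "finite (alpha1 ` partitions n)"
    by (rule finite_subset[of _ "{..k}"]) (use up in auto)
  show ?thesis unfolding b_seq_def by (rule Max_eqI[OF fin up wit])
qed

lemma tri_ex: "\<exists>k. tri k \<le> n \<and> n < tri (Suc k)"
proof (induction n)
  case 0 then show ?case by (intro exI[of _ 0]) simp
next
  case (Suc n)
  then obtain k where k: "tri k \<le> n" "n < tri (Suc k)" by blast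
  show ?case
  proof (cases "Suc n = tri (Suc k)")
    case True then show ?thesis by (intro exI[of _ "Suc k"]) simp
  next
    case False then show ?thesis using k by (intro exI[of _ k]) simp
  qed
qed

lemma b_0: "b_seq 0 = 0" by (rule b_char) simp_all

lemma b_rec: "(of_nat (b_seq (Suc i)) :: rat) - of_nat (b_seq i) = psi $ Suc i"
proof -
  obtain k where k: "tri k \<le> i" "i < tri (Suc k)" using tri_ex by blast
  have bi: "b_seq i = k" by (rule b_char[OF k])
  show ?thesis
  proof (cases "Suc i = tri (Suc k)")
    case True
    have "b_seq (Suc i) = Suc k" by (rule b_char) (use True in simp_all)
    moreover have "\<exists>k'. tri k' = Suc i" using True by (intro exI[of _ "Suc k"]) simp
    hence "psi $ Suc i = 1" unfolding psi_def by simp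
    ultimately show ?thesis using bi by simp
  next
    case False
    have "b_seq (Suc i) = k" by (rule b_char) (use False k in simp_all)
    moreover have "\<not> (\<exists>k'. tri k' = Suc i)"
    proof
      assume "\<exists>k'. tri k' = Suc i"
      then obtain k' where k': "tri k' = Suc i" by blast
      have "tri k < tri k'" using k k' by simp
      hence "k < k'" using strict_mono_less[OF tri_smono] by blast
      moreover have "tri k' < tri (Suc k)" using k k' False by simp
      hence "k' < Suc k" using strict_mono_less[OF tri_smono] by blast
      ultimately show False by simp
    qed
    hence "psi $ Suc i = 0" unfolding psi_def by simp
    ultimately show ?thesis using bi by simp
  qed
qed

theorem mainTheorem2:
  shows "(Abs_fps (\<lambda>n. of_nat (b_seq n)) :: rat fps)
    = inverse (1 - fps_X) * ((qpoch_inf 2) ^ 2 * inverse (qpoch_inf 1) - 1)"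
proof -
  define B where "B = (Abs_fps (\<lambda>n. of_nat (b_seq n)) :: rat fps)"
  have "(qpoch_inf 2 :: rat fps) ^ 2 * inverse (qpoch_inf 1) = psi * (PP * inverse PP)"
    using gauss by (simp add: algebra_simps)
  also have "PP * inverse PP = 1" by (rule inverse_mult_eq_1'[OF P_nz])
  finally have g: "(qpoch_inf 2 :: rat fps) ^ 2 * inverse (qpoch_inf 1) = psi" by simp
  have h: "(1 - fps_X) * B = psi - 1"
  proof (rule fps_ext)
    fix n
    have "((1 - fps_X) * B) $ n = B $ n - (fps_X * B) $ n" by (simp add: algebra_simps)
    also have "\<dots> = psi $ n - (1 :: rat fps) $ n"
    proof (cases n)
      case 0
      have "\<exists>k. tri k = 0" by (rule exI[of _ 0]) simp
      then show ?thesis using 0 by (simp add: B_def b_0 psi_def)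
    next
      case (Suc i) then show ?thesis using b_rec[of i] by (simp add: B_def)
    qed
    finally show "((1 - fps_X) * B) $ n = (psi - 1) $ n" by simp
  qed
  have u: "inverse (1 - fps_X) * (1 - fps_X) = (1 :: rat fps)" by (rule inverse_mult_eq_1) simp
  have "inverse (1 - fps_X) * ((qpoch_inf 2) ^ 2 * inverse (qpoch_inf 1) - 1)
      = inverse (1 - fps_X) * ((1 - fps_X) * B)" unfolding g h ..
  also have "\<dots> = B" by (simp add: mult.assoc[symmetric] u)
  finally show ?thesis by (simp add: B_def)
qed



end
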